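(* Let $(X,Z)\in\mathbb{R}^n\times\mathbb{R}^{n\times p}$ be any fixed design, $\mathcal{R}\subseteq[n]$ any row set, $\alpha\in(0,1)$, and let $P_{\pi\mid\mathcal{R}}$ be uniformly distributed on $\mathcal{S}_{n\mid\mathcal{R}}$. Let $D_\mathcal{R}=\|(I-H_{P_{\pi\mid\mathcal{R}}X,Z,P_{\pi\mid\mathcal{R}}Z})X\|_2^2$ with $\alpha$-quantile $F^{-1}_{D_\mathcal{R}}(\alpha;X,Z)$, and let $\mu_\mathcal{R}(Z)=E\{\mathrm{rank}(Z-P_{\pi\mid\mathcal{R}}Z)\}$. Then: (i) if $pr(X\in\mathcal{C}(Z,P_{\pi\mid\mathcal{R}}Z))\ge\alpha$, then $F^{-1}_{D_\mathcal{R}}(\alpha;X,Z)=0$; (ii) $\mu_\mathcal{R}(Z)\ge\mu_{\mathcal{R}\cup\{k\}}(Z)$ for any $k\in[n]\setminus\mathcal{R}$.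
   Context: $[n]=\{1,\dots,n\}$. $\mathcal{C}(M)$ is the column space of $M$ and $H_M$ the orthogonal projection onto it; $H_{A,B,C}$ is the projection onto the column space of $(A,B,C)$. For $\mathcal{R}\subseteq[n]$, $\mathcal{S}_{n\mid\mathcal{R}}$ is the group of $n\times n$ permutation matrices that fix every row index in $\mathcal{R}$ (diagonal entry $1$ at each $i\in\mathcal{R}$). The $\alpha$-quantile of a random variable $D$ is $F_D^{-1}(\alpha)=\inf\{x:pr(D\le x)\ge\alpha\}$. *)

theory Defs
  imports "HOL-Analysis.Analysis" "HOL-Combinatorics.Permutations"
begin

text \<open>Rows are indexed by the finite type 'n (so [n] = UNIV), columns of Z by 'p.\<close>

definition perm_mat :: "('n::finite \<Rightarrow> 'n) \<Rightarrow> real^'n^'n" where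
  "perm_mat \<sigma> = (\<chi> i j. if \<sigma> i = j then 1 else 0)"

definition perm_mats_fixing :: "'n::finite set \<Rightarrow> (real^'n^'n) set" where
  "perm_mats_fixing R = {P. (\<exists>\<sigma>. \<sigma> permutes (UNIV::'n set) \<and> P = perm_mat \<sigma>) \<and> (\<forall>i\<in>R. P $ i $ i = 1)}"

definition unif_pr :: "'a set \<Rightarrow> ('a \<Rightarrow> bool) \<Rightarrow> real" where
  "unif_pr S Q = real (card {x\<in>S. Q x}) / real (card S)"

definition unif_exp :: "'a set \<Rightarrow> ('a \<Rightarrow> real) \<Rightarrow> real" where
  "unif_exp S f = (\<Sum>x\<in>S. f x) / real (card S)"

definition unif_quantile :: "'a set \<Rightarrow> ('a \<Rightarrow> real) \<Rightarrow> real \<Rightarrow> real" where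
  "unif_quantile S D \<alpha> = Inf {x. unif_pr S (\<lambda>a. D a \<le> x) \<ge> \<alpha>}"

definition orth_proj :: "(real^'n) set \<Rightarrow> real^'n \<Rightarrow> real^'n" where
  "orth_proj V x = (THE y. y \<in> V \<and> (\<forall>v\<in>V. (x - y) \<bullet> v = 0))"

definition colspace_vmm :: "real^'n \<Rightarrow> real^'p^'n \<Rightarrow> real^'p^'n \<Rightarrow> (real^'n) set" where
  "colspace_vmm a B C = span (insert a (columns B \<union> columns C))"

definition colspace_mm :: "real^'p^'n \<Rightarrow> real^'p^'n \<Rightarrow> (real^'n) set" where
  "colspace_mm B C = span (columns B \<union> columns C)"

definition Dstat :: "real^'n \<Rightarrow> real^'p^'n \<Rightarrow> real^'n^'n \<Rightarrow> real" where
  "Dstat X Z P = (norm (X - orth_proj (colspace_vmm (P *v X) Z (P ** Z)) X))\<^sup>2"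

definition mu :: "'n::finite set \<Rightarrow> real^'p^'n \<Rightarrow> real" where
  "mu R Z = unif_exp (perm_mats_fixing R) (\<lambda>P. real (rank (Z - P ** Z)))"

end

theory Submission
  imports Defs
begin

definition Perms :: "'n::finite set \<Rightarrow> ('n \<Rightarrow> 'n) set" where
  "Perms R = {s. s permutes (UNIV::'n set) \<and> (\<forall>i\<in>R. s i = i)}"

lemma perm_mat_inj: "inj perm_mat"
proof (rule injI)
  fix s t :: "'n::finite \<Rightarrow> 'n" assume "perm_mat s = perm_mat t"
  then have "\<forall>i. perm_mat s $ i $ (s i) = perm_mat t $ i $ (s i)" by simp
  then show "s = t" by (auto simp: perm_mat_def fun_eq_iff split: if_splits)
qed

lemma perm_mats_fixing_eq: "perm_mats_fixing R = perm_mat ` Perms R"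
proof
  show "perm_mats_fixing R \<subseteq> perm_mat ` Perms R"
  proof
    fix P assume "P \<in> perm_mats_fixing R"
    then obtain s where s: "s permutes UNIV" "P = perm_mat s" "\<forall>i\<in>R. P $ i $ i = 1"
      unfolding perm_mats_fixing_def by blast
    then have "\<forall>i\<in>R. s i = i" by (auto simp: perm_mat_def split: if_splits)
    then show "P \<in> perm_mat ` Perms R" using s unfolding Perms_def by blast
  qed
qed (auto simp: perm_mats_fixing_def Perms_def perm_mat_def)

lemma finite_Perms: "finite (Perms R)"
  unfolding Perms_def by (rule finite_subset[OF _ finite_permutations[of "UNIV::'n set"]]) auto

lemma id_Perms: "id \<in> Perms R"
  unfolding Perms_def by (auto simp: permutes_id)

lemma card_Perms_pos: "card (Perms R) > 0"
  using finite_Perms id_Perms by (metis card_gt_0_iff empty_iff)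

lemma perm_mat_mult_row: "(perm_mat s ** Z) $ i = Z $ (s i)"
proof -
  have "(perm_mat s ** Z) $ i $ j = Z $ (s i) $ j" for j
  proof -
    have "(perm_mat s ** Z) $ i $ j = (\<Sum>k\<in>UNIV. (if s i = k then 1 else 0) * Z $ k $ j)"
      by (simp add: matrix_matrix_mult_def perm_mat_def)
    also have "\<dots> = (\<Sum>k\<in>UNIV. if k = s i then Z $ k $ j else 0)"
      by (rule sum.cong) auto
    also have "\<dots> = Z $ (s i) $ j" by simp
    finally show ?thesis .
  qed
  then show ?thesis by (simp add: vec_eq_iff)
qed

lemma orth_proj_self:
  assumes "subspace V" "x \<in> V"
  shows "orth_proj V x = x"
  unfolding orth_proj_def
proof (rule the_equality)
  show "x \<in> V \<and> (\<forall>v\<in>V. (x - x) \<bullet> v = 0)" using assms by simp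
next
  fix y assume y: "y \<in> V \<and> (\<forall>v\<in>V. (x - y) \<bullet> v = 0)"
  then have "x - y \<in> V" using assms subspace_diff by blast
  then have "(x - y) \<bullet> (x - y) = 0" using y by blast
  then show "y = x" by simp
qed

lemma rank_step:
  fixes Z :: "real^'p::finite^'n::finite"
  assumes "t k = k"
  shows "rank (Z - perm_mat t ** Z) \<le> rank (Z - perm_mat (t \<circ> Transposition.transpose j k) ** Z)"
proof -
  define s where "s = t \<circ> Transposition.transpose j k"
  have rowt: "row i (Z - perm_mat t ** Z) = Z $ i - Z $ (t i)" for i
    by (simp add: row_def vec_eq_iff perm_mat_mult_row)
  have rows: "row i (Z - perm_mat s ** Z) = Z $ i - Z $ (s i)" for i
    by (simp add: row_def vec_eq_iff perm_mat_mult_row)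
  have sub: "rows (Z - perm_mat t ** Z) \<subseteq> span (rows (Z - perm_mat s ** Z))"
  proof
    fix r assume "r \<in> rows (Z - perm_mat t ** Z)"
    then obtain i where r: "r = Z $ i - Z $ (t i)" by (auto simp: rows_def rowt)
    have inrow: "Z $ m - Z $ (s m) \<in> span (rows (Z - perm_mat s ** Z))" for m
      by (rule span_base) (auto simp: rows_def rows)
    show "r \<in> span (rows (Z - perm_mat s ** Z))"
    proof (cases "i = k")
      case True then show ?thesis using r assms by (simp add: span_zero)
    next
      case ik: False
      show ?thesis
      proof (cases "i = j")
        case True
        have "r = (Z $ j - Z $ (s j)) + (Z $ k - Z $ (s k))"
          using r True assms ik by (simp add: s_def)
        then show ?thesis using inrow span_add by metis
      next
        case False
        then have "s i = t i" using ik by (simp add: s_def)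
        then show ?thesis using r inrow by metis
      qed
    qed
  qed
  have "dim (rows (Z - perm_mat t ** Z)) \<le> dim (span (rows (Z - perm_mat s ** Z)))"
    by (rule dim_subset[OF sub])
  then show ?thesis by (simp add: row_rank_def dim_span s_def)
qed

lemma Perms_bij:
  assumes kR: "k \<notin> R"
  shows "bij_betw (\<lambda>(t,j). t \<circ> Transposition.transpose j k) (Perms (insert k R) \<times> (- R)) (Perms R)"
proof (rule bij_betw_byWitness[where f' = "\<lambda>s. (s \<circ> Transposition.transpose (inv s k) k, inv s k)"])
  show "\<forall>a\<in>Perms (insert k R) \<times> - R.
     (\<lambda>s. (s \<circ> Transposition.transpose (inv s k) k, inv s k)) ((\<lambda>(t,j). t \<circ> Transposition.transpose j k) a) = a"
  proof -
    have H: "inv (t \<circ> Transposition.transpose j k) k = j" if t: "t \<in> Perms (insert k R)" for t j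
    proof -
      have tp: "t permutes UNIV" "t k = k" using t by (auto simp: Perms_def)
      have sp: "t \<circ> Transposition.transpose j k permutes UNIV"
        using tp by (simp add: permutes_compose permutes_swap_id)
      have "(t \<circ> Transposition.transpose j k) j = k" using tp by simp
      then show ?thesis using permutes_inverses(2)[OF sp] by metis
    qed
    show ?thesis using H by (auto simp: comp_assoc)
  qed
next
  show "\<forall>a'\<in>Perms R. (\<lambda>(t,j). t \<circ> Transposition.transpose j k) ((\<lambda>s. (s \<circ> Transposition.transpose (inv s k) k, inv s k)) a') = a'"
    by (simp add: comp_assoc)
next
  show "(\<lambda>(t,j). t \<circ> Transposition.transpose j k) ` (Perms (insert k R) \<times> - R) \<subseteq> Perms R"
  proof
    fix x assume "x \<in> (\<lambda>(t,j). t \<circ> Transposition.transpose j k) ` (Perms (insert k R) \<times> - R)"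
    then obtain t j where t: "t \<in> Perms (insert k R)" and j: "j \<in> - R" and x: "x = t \<circ> Transposition.transpose j k"
      by auto
    have tp: "t permutes UNIV" "\<forall>i\<in>insert k R. t i = i" using t by (auto simp: Perms_def)
    have "t \<circ> Transposition.transpose j k permutes UNIV"
      using tp by (simp add: permutes_compose permutes_swap_id)
    moreover have "\<forall>i\<in>R. (t \<circ> Transposition.transpose j k) i = i"
    proof
      fix i assume i: "i \<in> R"
      then have "i \<noteq> j" "i \<noteq> k" using j kR by auto
      then show "(t \<circ> Transposition.transpose j k) i = i" using tp i by simp
    qed
    ultimately show "x \<in> Perms R" by (simp add: Perms_def x)
  qed
next
  show "(\<lambda>s. (s \<circ> Transposition.transpose (inv s k) k, inv s k)) ` Perms R \<subseteq> Perms (insert k R) \<times> - R"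
  proof
    fix x assume "x \<in> (\<lambda>s. (s \<circ> Transposition.transpose (inv s k) k, inv s k)) ` Perms R"
    then obtain s where s: "s \<in> Perms R" and x: "x = (s \<circ> Transposition.transpose (inv s k) k, inv s k)"
      by auto
    have sp: "s permutes UNIV" "\<forall>i\<in>R. s i = i" using s by (auto simp: Perms_def)
    define j where "j = inv s k"
    have sj: "s j = k" using permutes_inverses(1)[OF sp(1)] j_def by simp
    have jR: "j \<notin> R" using sj sp(2) kR by metis
    have "s \<circ> Transposition.transpose j k permutes UNIV"
      using sp by (simp add: permutes_compose permutes_swap_id)
    moreover have "\<forall>i\<in>insert k R. (s \<circ> Transposition.transpose j k) i = i"
    proof
      fix i assume i: "i \<in> insert k R"
      show "(s \<circ> Transposition.transpose j k) i = i"
      proof (cases "i = k")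
        case True then show ?thesis using sj by simp
      next
        case False
        then have "i \<in> R" "i \<noteq> j" using i jR by auto
        then show ?thesis using sp False by simp
      qed
    qed
    ultimately show "x \<in> Perms (insert k R) \<times> - R"
      using jR by (auto simp: Perms_def j_def x)
  qed
qed

lemma sum_Perms:
  assumes kR: "k \<notin> R"
  shows "(\<Sum>s\<in>Perms R. f s) = (\<Sum>t\<in>Perms (insert k R). \<Sum>j\<in>- R. f (t \<circ> Transposition.transpose j k))"
proof -
  have "(\<Sum>s\<in>Perms R. f s) = (\<Sum>x\<in>Perms (insert k R) \<times> (- R). f ((\<lambda>(t,j). t \<circ> Transposition.transpose j k) x))"
    using sum.reindex_bij_betw[OF Perms_bij[OF kR], of f] by simp
  also have "\<dots> = (\<Sum>t\<in>Perms (insert k R). \<Sum>j\<in>- R. f (t \<circ> Transposition.transpose j k))"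
    by (subst sum.cartesian_product) (simp add: split_def)
  finally show ?thesis .
qed

lemma mu_eq: "mu R Z = (\<Sum>s\<in>Perms R. real (rank (Z - perm_mat s ** Z))) / real (card (Perms R))"
proof -
  have inj: "inj_on perm_mat (Perms R)" using perm_mat_inj by (metis inj_on_subset subset_UNIV)
  show ?thesis unfolding mu_def unif_exp_def perm_mats_fixing_eq
    by (simp add: sum.reindex[OF inj] card_image[OF inj])
qed

lemma mu_mono:
  fixes Z :: "real^'p::finite^'n::finite"
  assumes kR: "k \<notin> R"
  shows "mu R Z \<ge> mu (insert k R) Z"
proof -
  define r where "r s = real (rank (Z - perm_mat s ** Z))" for s :: "'n \<Rightarrow> 'n"
  define c where "c = real (card (- R))"
  define N' where "N' = real (card (Perms (insert k R)))"
  define A' where "A' = (\<Sum>t\<in>Perms (insert k R). r t)"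
  have cpos: "c > 0" unfolding c_def using kR by (auto simp add: card_gt_0_iff)
  have Npos: "N' > 0" unfolding N'_def using card_Perms_pos by simp
  have card: "real (card (Perms R)) = c * N'"
    using bij_betw_same_card[OF Perms_bij[OF kR]] unfolding c_def N'_def
    by (simp add: card_cartesian_product) (metis of_nat_mult mult.commute)
  have "(\<Sum>s\<in>Perms R. r s) = (\<Sum>t\<in>Perms (insert k R). \<Sum>j\<in>- R. r (t \<circ> Transposition.transpose j k))"
    by (rule sum_Perms[OF kR])
  also have "\<dots> \<ge> (\<Sum>t\<in>Perms (insert k R). \<Sum>j\<in>- R. r t)"
  proof (rule sum_mono, rule sum_mono)
    fix t j assume "t \<in> Perms (insert k R)"
    then have "t k = k" by (simp add: Perms_def)
    then show "r t \<le> r (t \<circ> Transposition.transpose j k)"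
      unfolding r_def using rank_step by simp
  qed
  also have "(\<Sum>t\<in>Perms (insert k R). \<Sum>j\<in>- R. r t) = c * A'"
    by (simp add: c_def A'_def sum_distrib_left)
  finally have ge: "(\<Sum>s\<in>Perms R. r s) \<ge> c * A'" .
  have "mu (insert k R) Z = A' / N'" by (simp add: mu_eq A'_def N'_def r_def)
  also have "\<dots> = (c * A') / (c * N')" using cpos by simp
  also have "\<dots> \<le> (\<Sum>s\<in>Perms R. r s) / (c * N')"
    using ge cpos Npos by (intro divide_right_mono) auto
  also have "\<dots> = mu R Z" by (simp add: mu_eq card r_def)
  finally show ?thesis .
qed

lemma part1:
  fixes X :: "real^'n::finite" and Z :: "real^'p::finite^'n" and R :: "'n set" and \<alpha> :: real
  assumes "0 < \<alpha>"
    and h: "unif_pr (perm_mats_fixing R) (\<lambda>P. X \<in> colspace_mm Z (P ** Z)) \<ge> \<alpha>"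
  shows "unif_quantile (perm_mats_fixing R) (Dstat X Z) \<alpha> = 0"
proof -
  let ?S = "perm_mats_fixing R"
  have fin: "finite ?S" unfolding perm_mats_fixing_eq using finite_Perms by simp
  have D0: "Dstat X Z P = 0" if "X \<in> colspace_mm Z (P ** Z)" for P
  proof -
    have "X \<in> colspace_vmm (P *v X) Z (P ** Z)"
      using that unfolding colspace_mm_def colspace_vmm_def
      by (meson span_mono subset_insertI subsetD)
    then have "orth_proj (colspace_vmm (P *v X) Z (P ** Z)) X = X"
      by (rule orth_proj_self[rotated]) (simp add: colspace_vmm_def subspace_span)
    then show ?thesis by (simp add: Dstat_def)
  qed
  have "{x. unif_pr ?S (\<lambda>a. Dstat X Z a \<le> x) \<ge> \<alpha>} = {0..}"
  proof (intro set_eqI iffI)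
    fix x assume x: "x \<in> {x. unif_pr ?S (\<lambda>a. Dstat X Z a \<le> x) \<ge> \<alpha>}"
    show "x \<in> {0..}"
    proof (rule ccontr)
      assume "x \<notin> {0..}"
      then have "x < 0" by simp
      then have "{a\<in>?S. Dstat X Z a \<le> x} = {}"
        by (auto simp: Dstat_def) (smt (verit) zero_le_power2)
      then have "unif_pr ?S (\<lambda>a. Dstat X Z a \<le> x) = 0" unfolding unif_pr_def by (metis card.empty of_nat_0 div_0)
      then show False using x assms(1) by simp
    qed
  next
    fix x assume "x \<in> {0::real..}"
    then have x: "x \<ge> 0" by simp
    have sub: "{a\<in>?S. X \<in> colspace_mm Z (a ** Z)} \<subseteq> {a\<in>?S. Dstat X Z a \<le> x}"
      using D0 x by auto
    have "card {a\<in>?S. X \<in> colspace_mm Z (a ** Z)} \<le> card {a\<in>?S. Dstat X Z a \<le> x}"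
      by (rule card_mono[OF _ sub]) (simp add: fin)
    then have "unif_pr ?S (\<lambda>P. X \<in> colspace_mm Z (P ** Z)) \<le> unif_pr ?S (\<lambda>a. Dstat X Z a \<le> x)"
      unfolding unif_pr_def by (simp add: divide_right_mono)
    then show "x \<in> {x. unif_pr ?S (\<lambda>a. Dstat X Z a \<le> x) \<ge> \<alpha>}" using h by simp
  qed
  then show ?thesis unfolding unif_quantile_def by simp
qed

theorem proposition2:
  fixes X :: "real^'n::finite" and Z :: "real^'p::finite^'n" and R :: "'n set" and \<alpha> :: real
  assumes "0 < \<alpha>" and "\<alpha> < 1"
  shows "(unif_pr (perm_mats_fixing R) (\<lambda>P. X \<in> colspace_mm Z (P ** Z)) \<ge> \<alpha>
            \<longrightarrow> unif_quantile (perm_mats_fixing R) (Dstat X Z) \<alpha> = 0)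
       \<and> (\<forall>k. k \<notin> R \<longrightarrow> mu R Z \<ge> mu (insert k R) Z)"
  using part1[OF assms(1)] mu_mono by blast

end
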